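(* If $x\ge1$ and $y\ge1$, then $\Gamma(x,y)\ge B(x,y)$. If $0<x\le1$ and $0<y\le1$, then $\Gamma(x,y)\le B(x,y)$.
   Context: For $x>0,y>0$ the Bigamma function is the (convergent) improper integral $\Gamma(x,y):=\int_0^1(-\ln t)^{x-1}\big(-\ln(1-t)\big)^{y-1}\,dt$. $B(x,y)=\int_0^1t^{x-1}(1-t)^{y-1}\,dt$ is the Euler Beta function. *)

theory Defs
  imports "HOL-Analysis.Analysis"
begin

text \<open>The integrand is nonnegative, so the (convergent) improper integral coincides
  with the Lebesgue integral over the open interval.\<close>
definition Bigamma :: "real \<Rightarrow> real \<Rightarrow> real" where
  "Bigamma x y = (LINT t:{0<..<1}|lborel. (- ln t) powr (x - 1) * (- ln (1 - t)) powr (y - 1))"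

definition BetaInt :: "real \<Rightarrow> real \<Rightarrow> real" where
  "BetaInt x y = (LINT t:{0<..<1}|lborel. t powr (x - 1) * (1 - t) powr (y - 1))"

end

theory Submission
  imports Defs
begin

lemma reflect01:
  fixes f :: "real \<Rightarrow> real"
  shows "set_integrable lborel {0<..<1} (\<lambda>t. f (1 - t)) \<longleftrightarrow> set_integrable lborel {0<..<1} f"
    and "(LINT t:{0<..<1}|lborel. f (1 - t)) = (LINT t:{0<..<1}|lborel. f t)"
proof -
  have ind: "indicator {0<..<1} (1 - t) = (indicator {0<..<1} t :: real)" for t :: real
    by (auto simp: indicator_def)
  have e: "(\<lambda>t. indicator {0<..<1} (1 + (-1) * t) *\<^sub>R f (1 + (-1) * t)) = (\<lambda>t. indicator {0<..<1} t *\<^sub>R f (1 - t))"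
    by (rule ext) (simp add: ind)
  show "set_integrable lborel {0<..<1} (\<lambda>t. f (1 - t)) \<longleftrightarrow> set_integrable lborel {0<..<1} f"
    unfolding set_integrable_def
    using lborel_integrable_real_affine_iff[of "-1" "\<lambda>t. indicator {0<..<1} t *\<^sub>R f t" 1]
    by (simp add: e ind)
  show "(LINT t:{0<..<1}|lborel. f (1 - t)) = (LINT t:{0<..<1}|lborel. f t)"
    unfolding set_lebesgue_integral_def
    using lborel_integral_real_affine[of "-1" "\<lambda>t. indicator {0<..<1} t *\<^sub>R f t" 1]
    by (simp add: e ind)
qed

lemma beta_int:
  fixes a b :: real assumes "a > 0" "b > 0"
  shows "set_integrable lborel {0<..<1} (\<lambda>t. t powr (a - 1) * (1 - t) powr (b - 1))"
proof -
  have "((\<lambda>t. t powr (a - 1) * (1 - t) powr (b - 1)) has_integral Beta a b) {0<..<1}"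
    using has_integral_Beta_real[of a b] assms by (simp add: has_integral_Icc_iff_Ioo)
  hence "(\<lambda>t. t powr (a - 1) * (1 - t) powr (b - 1)) absolutely_integrable_on {0<..<1}"
    by (intro nonnegative_absolutely_integrable_1) auto
  hence "integrable lebesgue (\<lambda>t. indicator {0<..<1} t *\<^sub>R (t powr (a - 1) * (1 - t) powr (b - 1)))"
    by (simp add: set_integrable_def)
  hence "integrable lborel (\<lambda>t. indicator {0<..<1} t *\<^sub>R (t powr (a - 1) * (1 - t) powr (b - 1)))"
    by (subst (asm) integrable_completion) measurable
  thus ?thesis by (simp add: set_integrable_def)
qed

lemma mln: "(\<lambda>t::real. indicator {0<..<1} t *\<^sub>R ((- ln t) powr c * (- ln (1 - t)) powr d)) \<in> borel_measurable lborel"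
  by measurable

lemma ln_bound:
  fixes t e :: real assumes "0 < t" "t < 1" "e > 0"
  shows "- ln t \<le> t powr (- e) / e"
proof -
  have "ln (t powr (-e)) \<le> t powr (-e) - 1" using assms by (intro ln_le_minus_one) auto
  hence "- e * ln t \<le> t powr (-e)" using assms by (simp add: ln_powr)
  hence "e * (- ln t) \<le> t powr (-e)" by simp
  thus ?thesis using assms by (simp add: field_simps)
qed

lemma ln_powr_bound:
  fixes t c :: real assumes "0 < t" "t < 1" "c \<ge> 0"
  shows "(- ln t) powr c \<le> (2*c+1) powr c * t powr (- (c/(2*c+1)))"
proof -
  define e where "e = 1/(2*c+1)"
  have e: "e > 0" using assms by (simp add: e_def)
  have "(- ln t) powr c \<le> (t powr (- e) / e) powr c"
    using assms ln_bound[OF assms(1,2) e] by (intro powr_mono2) auto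
  also have "\<dots> = (2*c+1) powr c * t powr (- (c/(2*c+1)))"
  proof -
    have "(t powr (1 / (2 * c + 1))) powr c = t powr (c / (2 * c + 1))" by (simp add: powr_powr)
    thus ?thesis using assms by (simp add: e_def powr_mult powr_powr[symmetric] powr_divide divide_simps powr_minus)
  qed
  finally show ?thesis .
qed

lemma sint_bound:
  fixes F G :: "real \<Rightarrow> real"
  assumes "set_integrable lborel {0<..<1} F"
    and "(\<lambda>t. indicator {0<..<1} t *\<^sub>R G t) \<in> borel_measurable lborel"
    and "\<And>t. t \<in> {0<..<1} \<Longrightarrow> \<bar>G t\<bar> \<le> F t"
  shows "set_integrable lborel {0<..<1} G"
proof -
  have i1: "integrable lborel (\<lambda>t. indicator {0<..<1} t *\<^sub>R F t)"
    using assms(1) by (simp add: set_integrable_def)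
  have ae: "AE t in lborel. norm (indicator {0<..<1} t *\<^sub>R G t) \<le> norm (indicator {0<..<1} t *\<^sub>R F t)"
    using assms(3) by (intro AE_I2) (force simp: indicator_def intro: order_trans[OF _ abs_ge_self])
  show ?thesis unfolding set_integrable_def
    using Bochner_Integration.integrable_bound[OF i1 assms(2) ae] .
qed

lemma mG: "(\<lambda>t::real. indicator {0<..<1} t *\<^sub>R ((- ln (1 - t)) powr c * (- ln t) powr d)) \<in> borel_measurable lborel"
  by measurable

theorem mainTheorem9:
  fixes x y :: real
  shows "(x \<ge> 1 \<and> y \<ge> 1 \<longrightarrow> Bigamma x y \<ge> BetaInt x y) \<and>
         (0 < x \<and> x \<le> 1 \<and> 0 < y \<and> y \<le> 1 \<longrightarrow> Bigamma x y \<le> BetaInt x y)"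
proof -
  define G where "G t = (- ln (1 - t)) powr (x - 1) * (- ln t) powr (y - 1)" for t :: real
  define B where "B t = t powr (x - 1) * (1 - t) powr (y - 1)" for t :: real
  have BG: "Bigamma x y = (LINT t:{0<..<1}|lborel. G t)"
    unfolding Bigamma_def G_def
    using reflect01(2)[of "\<lambda>t. (- ln t) powr (x - 1) * (- ln (1 - t)) powr (y - 1)"]
    by (simp add: mult.commute)
  have BB: "BetaInt x y = (LINT t:{0<..<1}|lborel. B t)"
    unfolding BetaInt_def B_def ..
  have mG': "(\<lambda>t. indicator {0<..<1} t *\<^sub>R G t) \<in> borel_measurable lborel"
    unfolding G_def by (rule mG)
  have l1: "1 - t \<le> - ln t" if "0 < t" "t < 1" for t :: real
    using ln_le_minus_one[of t] that by simp
  have l2: "t \<le> - ln (1 - t)" if "0 < t" "t < 1" for t :: real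
    using ln_le_minus_one[of "1 - t"] that by simp
  have part1: "Bigamma x y \<ge> BetaInt x y" if x: "x \<ge> 1" and y: "y \<ge> 1"
  proof -
    define c1 where "c1 = x - 1"
    define c2 where "c2 = y - 1"
    have c: "c1 \<ge> 0" "c2 \<ge> 0" using x y by (auto simp: c1_def c2_def)
    define K where "K = (2*c2+1) powr c2 * (2*c1+1) powr c1"
    define a where "a = 1 - c2/(2*c2+1)"
    define b where "b = 1 - c1/(2*c1+1)"
    have ab: "a > 0" "b > 0" using c by (auto simp: a_def b_def field_simps)
    have ib: "set_integrable lborel {0<..<1} (\<lambda>t. t powr (a - 1) * (1 - t) powr (b - 1))"
      by (rule beta_int[OF ab])
    hence ibK: "set_integrable lborel {0<..<1} (\<lambda>t. K * (t powr (a - 1) * (1 - t) powr (b - 1)))"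
      by (rule set_integrable_mult_right)
    have iG: "set_integrable lborel {0<..<1} G"
    proof (rule sint_bound[OF ibK mG'])
      fix t :: real assume t: "t \<in> {0<..<1}"
      have "\<bar>G t\<bar> = G t" unfolding G_def by simp
      also have "G t \<le> ((2*c1+1) powr c1 * (1 - t) powr (- (c1/(2*c1+1)))) *
                        ((2*c2+1) powr c2 * t powr (- (c2/(2*c2+1))))"
        unfolding G_def c1_def[symmetric] c2_def[symmetric]
        using t c ln_powr_bound[of "1 - t" c1] ln_powr_bound[of t c2]
        by (intro mult_mono) auto
      also have "\<dots> = K * (t powr (a - 1) * (1 - t) powr (b - 1))"
        by (simp add: K_def a_def b_def)
      finally show "\<bar>G t\<bar> \<le> K * (t powr (a - 1) * (1 - t) powr (b - 1))" .
    qed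
    have iB: "set_integrable lborel {0<..<1} B"
      unfolding B_def using beta_int[of x y] x y by simp
    have "BetaInt x y \<le> Bigamma x y"
      unfolding BG BB
    proof (rule set_integral_mono[OF iB iG])
      fix t :: real assume t: "t \<in> {0<..<1}"
      show "B t \<le> G t" unfolding B_def G_def
        using t x y l1[of t] l2[of t]
        by (intro mult_mono powr_mono2) auto
    qed
    thus ?thesis .
  qed
  have part2: "Bigamma x y \<le> BetaInt x y" if x: "0 < x" "x \<le> 1" and y: "0 < y" "y \<le> 1"
  proof -
    have iB: "set_integrable lborel {0<..<1} B"
      unfolding B_def using beta_int[of x y] x y by simp
    have le: "G t \<le> B t" if t: "t \<in> {0<..<1}" for t
      unfolding B_def G_def
      using t x y l1[of t] l2[of t]
      by (intro mult_mono powr_mono2') auto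
    have iG: "set_integrable lborel {0<..<1} G"
    proof (rule sint_bound[OF iB mG'])
      fix t :: real assume t: "t \<in> {0<..<1}"
      show "\<bar>G t\<bar> \<le> B t" using le[OF t] by (simp add: G_def)
    qed
    show ?thesis unfolding BG BB by (rule set_integral_mono[OF iG iB le])
  qed
  show ?thesis using part1 part2 by blast
qed

end
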